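(* Let $\Lambda\subseteq[0,\infty]$. Suppose there are constants $c_\ell,c_\pi,c_m>0$, $\lambda_\pi<\infty$, $C_{\ell,3},C_{\pi,3}<\infty$ such that: (a) for all $i\in[n]$ and all $\lambda,\lambda'\in\Lambda$, the function $m(P_{-i},\cdot,\lambda)$ has $\nu(r)=c_m r^2$ gradient growth and $\nabla^2_\beta m(P_{-i},\hat\beta(\lambda),\lambda')\succeq c_{\lambda',\lambda}I_d$, where $c_{\lambda',\lambda}:=c_\ell+\lambda' c_\pi\mathbf 1\{\lambda\ge\lambda_\pi\}$; (b) $B_{s,r}<\infty$ for each $(s,r)\in\{(0,3),(1,3),(1,4)\}$; (c) $\mathrm{Lip}(\nabla^2_\beta m(P_{-i},\cdot,\lambda))\le C_{\ell,3}+\lambda C_{\pi,3}$ for all $\lambda\in\Lambda$, $i\in[n]$. Then for each $\lambda\in\Lambda$, $$|\mathrm{ACV}(\lambda)-\mathrm{CV}(\lambda)|\le \frac{\kappa_2}{n^2}\frac{B_{0,3}}{c_m^2}+\frac{\kappa_2}{n^3}\frac{B_{1,3}}{c_m^3}+\frac{\kappa_2^2}{n^4}\frac{B_{1,4}}{2c_m^4},$$ where $\kappa_2:=\sup_{\lambda\ge0}\frac{C_{\ell,3}+\lambda C_{\pi,3}}{2!\,(c_\ell+\lambda c_\pi\mathbf 1\{\lambda\ge\lambda_\pi\})}$.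
   Context: Data $z_1,\dots,z_n$ lie in a set $\mathcal Z$; $\ell:\mathcal Z\times\mathbb{R}^d\to\mathbb{R}$ is a loss and $\pi:\mathbb{R}^d\to\mathbb{R}$ a regularizer (assumed sufficiently differentiable for all expressions to make sense). For a measure $\mu$ on $\mathcal Z$, $\ell(\mu,\beta):=\int\ell(z,\beta)\,d\mu(z)$ and $m(\mu,\beta,\lambda):=\ell(\mu,\beta)+\lambda\pi(\beta)$. Let $P_n:=\frac1n\sum_{i=1}^n\delta_{z_i}$ and $P_{-i}:=\frac1n\sum_{j\ne i}\delta_{z_j}$. Define $\hat\beta(\lambda):=\arg\min_\beta m(P_n,\beta,\lambda)$ for $\lambda\in[0,\infty)$ and $\hat\beta(\infty):=\arg\min_\beta\pi(\beta)$; $\hat\beta_{-i}(\lambda):=\arg\min_\beta m(P_{-i},\beta,\lambda)=\arg\min_\beta\frac1n\sum_{j\neq i}\ell(z_j,\beta)+\lambda\pi(\beta)$. $\mathrm{CV}(\lambda):=\frac1n\sum_{i=1}^n\ell(z_i,\hat\beta_{-i}(\lambda))$. The approximate leave-one-out estimator is $\tilde\beta_{-i}(\lambda):=\hat\beta(\lambda)+\nabla^2_\beta m(P_{-i},\hat\beta(\lambda),\lambda)^{-1}\frac{\nabla_\beta\ell(z_i,\hat\beta(\lambda))}{n}$ and $\mathrm{ACV}(\lambda):=\frac1n\sum_{i=1}^n\ell(z_i,\tilde\beta_{-i}(\lambda))$. $\|\cdot\|_2$ is the Euclidean norm; for a matrix or tensor $H$, $\|H\|_{op}:=\sup_{v\ne0}\|H[v]\|_{op}/\|v\|_2$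 with $\|v\|_{op}=\|v\|_2$ for vectors; $\mathrm{Lip}(f):=\sup_{x\ne y}\|f(x)-f(y)\|_{op}/\|x-y\|_2$. $B_{s,r}:=\sup_{\lambda\in\Lambda}\frac1n\sum_{i=1}^n\mathrm{Lip}(\nabla_\beta\ell(z_i,\cdot))^s\|\nabla_\beta\ell(z_i,\hat\beta(\lambda))\|_2^r$. A function $\varphi$ has $\nu$ gradient growth if it is subdifferentiable and $\nu(\|x-y\|_2)\le\langle y-x,u-v\rangle$ for all $x,y$ and all $u\in\partial\varphi(y),v\in\partial\varphi(x)$. *)

theory Defs
  imports "HOL-Analysis.Analysis"
begin

definition subdiff :: "('a::real_inner \<Rightarrow> real) \<Rightarrow> 'a \<Rightarrow> 'a set" where
  "subdiff f x = {u. \<forall>y. f x + u \<bullet> (y - x) \<le> f y}"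

definition gradient_growth :: "(real \<Rightarrow> real) \<Rightarrow> ('a::real_inner \<Rightarrow> real) \<Rightarrow> bool" where
  "gradient_growth \<nu> \<phi> \<longleftrightarrow> (\<forall>x. subdiff \<phi> x \<noteq> {}) \<and>
     (\<forall>x y u v. u \<in> subdiff \<phi> y \<longrightarrow> v \<in> subdiff \<phi> x \<longrightarrow> \<nu> (norm (x - y)) \<le> (y - x) \<bullet> (u - v))"

definition Lip :: "('a::real_normed_vector \<Rightarrow> 'b::real_normed_vector) \<Rightarrow> ereal" where
  "Lip f = (SUP p \<in> {(x, y). x \<noteq> y}. ereal (norm (f (fst p) - f (snd p)) / norm (fst p - snd p)))"

definition opnorm :: "real^'n^'m \<Rightarrow> real" where
  "opnorm A = onorm (\<lambda>v. A *v v)"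

definition Lip_op :: "('a::real_normed_vector \<Rightarrow> real^'n^'m) \<Rightarrow> ereal" where
  "Lip_op f = (SUP p \<in> {(x, y). x \<noteq> y}. ereal (opnorm (f (fst p) - f (snd p)) / norm (fst p - snd p)))"

definition m_full :: "('z \<Rightarrow> real^'d \<Rightarrow> real) \<Rightarrow> (real^'d \<Rightarrow> real) \<Rightarrow> (nat \<Rightarrow> 'z) \<Rightarrow> nat
    \<Rightarrow> real^'d \<Rightarrow> real \<Rightarrow> real" where
  "m_full L \<pi> z n \<beta> lam = (\<Sum>j\<in>{1..n}. L (z j) \<beta>) / real n + lam * \<pi> \<beta>"

definition m_loo :: "('z \<Rightarrow> real^'d \<Rightarrow> real) \<Rightarrow> (real^'d \<Rightarrow> real) \<Rightarrow> (nat \<Rightarrow> 'z) \<Rightarrow> nat \<Rightarrow> nat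
    \<Rightarrow> real^'d \<Rightarrow> real \<Rightarrow> real" where
  "m_loo L \<pi> z n i \<beta> lam = (\<Sum>j\<in>{1..n} - {i}. L (z j) \<beta>) / real n + lam * \<pi> \<beta>"

definition hess_loo :: "('z \<Rightarrow> real^'d \<Rightarrow> real^'d^'d) \<Rightarrow> (real^'d \<Rightarrow> real^'d^'d) \<Rightarrow> (nat \<Rightarrow> 'z)
    \<Rightarrow> nat \<Rightarrow> nat \<Rightarrow> real^'d \<Rightarrow> real \<Rightarrow> real^'d^'d" where
  "hess_loo Hl Hp z n i \<beta> lam = (1 / real n) *\<^sub>R (\<Sum>j\<in>{1..n} - {i}. Hl (z j) \<beta>) + lam *\<^sub>R Hp \<beta>"

text \<open>CV(lam), with bhi i lam the leave-i-out minimizer.\<close>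
definition CV :: "('z \<Rightarrow> real^'d \<Rightarrow> real) \<Rightarrow> (nat \<Rightarrow> 'z) \<Rightarrow> nat \<Rightarrow> (nat \<Rightarrow> real \<Rightarrow> real^'d)
    \<Rightarrow> real \<Rightarrow> real" where
  "CV L z n bhi lam = (\<Sum>i\<in>{1..n}. L (z i) (bhi i lam)) / real n"

text \<open>Approximate leave-one-out estimator and ACV(lam), with bh lam the full-data minimizer.\<close>
definition approx_loo :: "('z \<Rightarrow> real^'d \<Rightarrow> real^'d) \<Rightarrow> ('z \<Rightarrow> real^'d \<Rightarrow> real^'d^'d)
    \<Rightarrow> (real^'d \<Rightarrow> real^'d^'d) \<Rightarrow> (nat \<Rightarrow> 'z) \<Rightarrow> nat \<Rightarrow> (real \<Rightarrow> real^'d) \<Rightarrow> nat \<Rightarrow> real \<Rightarrow> real^'d" where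
  "approx_loo gl Hl Hp z n bh i lam =
     bh lam + matrix_inv (hess_loo Hl Hp z n i (bh lam) lam) *v ((1 / real n) *\<^sub>R gl (z i) (bh lam))"

definition ACV :: "('z \<Rightarrow> real^'d \<Rightarrow> real) \<Rightarrow> ('z \<Rightarrow> real^'d \<Rightarrow> real^'d) \<Rightarrow> ('z \<Rightarrow> real^'d \<Rightarrow> real^'d^'d)
    \<Rightarrow> (real^'d \<Rightarrow> real^'d^'d) \<Rightarrow> (nat \<Rightarrow> 'z) \<Rightarrow> nat \<Rightarrow> (real \<Rightarrow> real^'d) \<Rightarrow> real \<Rightarrow> real" where
  "ACV L gl Hl Hp z n bh lam = (\<Sum>i\<in>{1..n}. L (z i) (approx_loo gl Hl Hp z n bh i lam)) / real n"

definition Bsr :: "('z \<Rightarrow> real^'d \<Rightarrow> real^'d) \<Rightarrow> (nat \<Rightarrow> 'z) \<Rightarrow> nat \<Rightarrow> (real \<Rightarrow> real^'d) \<Rightarrow> real set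
    \<Rightarrow> nat \<Rightarrow> nat \<Rightarrow> ereal" where
  "Bsr gl z n bh \<Lambda> s r = (SUP lam\<in>\<Lambda>.
     (\<Sum>i\<in>{1..n}. Lip (gl (z i)) ^ s * ereal (norm (gl (z i) (bh lam)) ^ r)) / ereal (real n))"

definition kappa2 :: "real \<Rightarrow> real \<Rightarrow> real \<Rightarrow> real \<Rightarrow> real \<Rightarrow> ereal" where
  "kappa2 Cl3 Cp3 cl cp lpi = (SUP lam\<in>{0..}.
     ereal ((Cl3 + lam * Cp3) / (fact 2 * (cl + lam * cp * (if lam \<ge> lpi then 1 else 0)))))"

end

theory Submission
  imports Defs
begin

lemma line_deriv_scalar:
  fixes f :: "real^'d \<Rightarrow> real"
  assumes "\<And>x. (f has_derivative (\<lambda>h. G x \<bullet> h)) (at x)"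
  shows "((\<lambda>t. f (a + t *\<^sub>R d)) has_real_derivative (G (a + t *\<^sub>R d) \<bullet> d)) (at t)"
proof -
  have i: "((\<lambda>t. a + t *\<^sub>R d) has_derivative (\<lambda>s. s *\<^sub>R d)) (at t)"
    by (auto intro!: derivative_eq_intros)
  have "((\<lambda>t. f (a + t *\<^sub>R d)) has_derivative (\<lambda>s. G (a + t *\<^sub>R d) \<bullet> (s *\<^sub>R d))) (at t)"
    using has_derivative_compose[OF i assms] by simp
  then show ?thesis unfolding has_field_derivative_def
    by (rule has_derivative_eq_rhs) (simp add: fun_eq_iff mult.commute)
qed

lemma line_deriv_vec:
  fixes F :: "real^'d \<Rightarrow> real^'d"
  assumes "\<And>x. (F has_derivative (\<lambda>h. A x *v h)) (at x)"
  shows "((\<lambda>t. w \<bullet> F (a + t *\<^sub>R d)) has_real_derivative (w \<bullet> (A (a + t *\<^sub>R d) *v d))) (at t)"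
proof -
  have i: "((\<lambda>t. a + t *\<^sub>R d) has_derivative (\<lambda>s. s *\<^sub>R d)) (at t)"
    by (auto intro!: derivative_eq_intros)
  have "((\<lambda>t. F (a + t *\<^sub>R d)) has_derivative (\<lambda>s. A (a + t *\<^sub>R d) *v (s *\<^sub>R d))) (at t)"
    using has_derivative_compose[OF i assms] by simp
  then have "((\<lambda>t. w \<bullet> F (a + t *\<^sub>R d)) has_derivative (\<lambda>s. w \<bullet> (A (a + t *\<^sub>R d) *v (s *\<^sub>R d)))) (at t)"
    by (rule has_derivative_inner_right)
  then show ?thesis unfolding has_field_derivative_def
    by (rule has_derivative_eq_rhs) (simp add: fun_eq_iff mult.commute matrix_vector_mult_scaleR)
qed

lemma seg_bound:
  fixes \<phi> \<phi>' :: "real \<Rightarrow> real"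
  assumes "\<And>t. (\<phi> has_real_derivative \<phi>' t) (at t)"
    and "\<And>t. 0 \<le> t \<Longrightarrow> t \<le> 1 \<Longrightarrow> \<phi>' t \<le> a + b * t"
  shows "\<phi> 1 - \<phi> 0 \<le> a + b / 2"
proof -
  define \<psi> where "\<psi> t = \<phi> t - a * t - b / 2 * t^2" for t
  have d: "(\<psi> has_real_derivative (\<phi>' t - a - b * t)) (at t)" for t
    unfolding \<psi>_def by (auto intro!: derivative_eq_intros assms(1))
  obtain z where z: "0 < z" "z < 1" "\<psi> 1 - \<psi> 0 = (1 - 0) * (\<phi>' z - a - b * z)"
    using MVT2[of 0 1 \<psi> "\<lambda>t. \<phi>' t - a - b * t"] d by auto
  have "\<phi>' z - a - b * z \<le> 0" using assms(2)[of z] z by auto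
  then show ?thesis using z(3) unfolding \<psi>_def by simp
qed

lemma grad_in_subdiff:
  fixes f :: "real^'d \<Rightarrow> real"
  assumes "\<And>x. (f has_derivative (\<lambda>h. G x \<bullet> h)) (at x)"
    and "u \<in> {u. \<forall>y. f x + u \<bullet> (y - x) \<le> f y}"
  shows "G x = u"
proof -
  have "((\<lambda>y. f y - u \<bullet> (y - x)) has_derivative (\<lambda>h. G x \<bullet> h - u \<bullet> h)) (at x)"
    by (auto intro!: derivative_eq_intros assms(1))
  moreover have "\<forall>\<^sub>F y in at x. f x - u \<bullet> (x - x) \<le> f y - u \<bullet> (y - x)"
    using assms(2) by (auto simp: algebra_simps)
  ultimately have "(\<lambda>h. G x \<bullet> h - u \<bullet> h) = (\<lambda>h. 0)"
    by (rule has_derivative_local_min)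
  then have "(G x - u) \<bullet> (G x - u) = 0" by (metis inner_diff_left)
  then show ?thesis by simp
qed

lemma min_grad_zero:
  fixes f :: "real^'d \<Rightarrow> real"
  assumes "\<And>x. (f has_derivative (\<lambda>h. G x \<bullet> h)) (at x)"
    and "is_arg_min f (\<lambda>_. True) x"
  shows "G x = 0"
proof -
  have "\<forall>\<^sub>F y in at x. f x \<le> f y"
    using assms(2) by (auto simp: is_arg_min_def not_less)
  then have "(\<lambda>h. G x \<bullet> h) = (\<lambda>h. 0)"
    by (rule has_derivative_local_min[OF assms(1)])
  then have "G x \<bullet> G x = 0" by metis
  then show ?thesis by simp
qed

lemma per_i:
  fixes l :: "real^'d \<Rightarrow> real" and gL G :: "real^'d \<Rightarrow> real^'d"
    and H :: "real^'d \<Rightarrow> real^'d^'d"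
  assumes dl: "\<And>x. (l has_derivative (\<lambda>h. gL x \<bullet> h)) (at x)"
    and dG: "\<And>x. (G has_derivative (\<lambda>h. H x *v h)) (at x)"
    and Gs: "G bs = 0"
    and Gh: "G bh = - ((1/nn) *\<^sub>R gL bh)"
    and grow: "cm * (norm (bh - bs))\<^sup>2 \<le> (bs - bh) \<bullet> (G bs - G bh)"
    and hpos: "\<And>v. c * (v \<bullet> v) \<le> v \<bullet> (H bh *v v)"
    and hlip: "\<And>x y. opnorm (H x - H y) \<le> M * norm (x - y)"
    and lip: "gL bh = 0 \<or> (\<forall>x y. norm (gL x - gL y) \<le> Li * norm (x - y))"
    and pos: "nn > 0" "cm > 0" "c > 0" "Li \<ge> 0"
  shows "\<bar>l (bh + matrix_inv (H bh) *v ((1/nn) *\<^sub>R gL bh)) - l bs\<bar>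
    \<le> (M/(2*c)) * (norm (gL bh))^3 / (nn^2*cm^2)
     + (M/(2*c)) * (Li * (norm (gL bh))^3) / (nn^3*cm^3)
     + (M/(2*c))^2 * (Li * (norm (gL bh))^4) / (2*nn^4*cm^4)"
proof -
  define g where "g = norm (gL bh)"
  define r where "r = norm (bh - bs)"
  define K where "K = M / (2*c)"
  define \<rho> where "\<rho> = g / (nn * cm)"
  have g0: "g \<ge> 0" "r \<ge> 0" unfolding g_def r_def by auto
  have M0: "M \<ge> 0"
  proof -
    obtain k :: 'd where True by simp
    have "0 \<le> opnorm (H 0 - H (axis k 1))"
      unfolding opnorm_def by (rule onorm_pos_le[OF matrix_vector_mul_bounded_linear])
    also have "\<dots> \<le> M * norm (0 - axis k (1::real))" by (rule hlip)
    finally show ?thesis by (simp add: norm_axis_1)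
  qed
  have K0: "K \<ge> 0" unfolding K_def using M0 pos by simp
  have \<rho>0: "\<rho> \<ge> 0" unfolding \<rho>_def using g0 pos by simp
  have "cm * r^2 \<le> (bs - bh) \<bullet> ((1/nn) *\<^sub>R gL bh)"
    using grow Gs Gh unfolding r_def by simp
  also have "\<dots> \<le> norm (bs - bh) * norm ((1/nn) *\<^sub>R gL bh)" by (rule norm_cauchy_schwarz)
  also have "\<dots> = r * (g / nn)" unfolding r_def g_def using pos by (simp add: norm_minus_commute)
  finally have rr: "cm * r^2 \<le> r * (g / nn)" .
  have r\<rho>: "r \<le> \<rho>"
  proof (cases "r = 0")
    case True then show ?thesis using \<rho>0 by simp
  next
    case False
    then have "r > 0" using g0 by simp
    have "r * (cm * r) \<le> r * (g / nn)" using rr by (simp add: power2_eq_square algebra_simps)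
    then have "cm * r \<le> g / nn" using \<open>r > 0\<close> by (rule mult_left_le_imp_le)
    then show ?thesis unfolding \<rho>_def using pos by (simp add: field_simps)
  qed
  have Hinj: "\<And>x. H bh *v x = 0 \<longrightarrow> x = 0"
  proof (intro impI)
    fix x assume "H bh *v x = 0"
    then have "c * (x \<bullet> x) \<le> 0" using hpos[of x] by simp
    then have "x \<bullet> x \<le> 0" using pos by (simp add: mult_le_0_iff)
    then show "x = 0" by (metis inner_eq_zero_iff inner_ge_zero order.antisym)
  qed
  have inv: "invertible (H bh)"
    using Hinj by (simp add: invertible_left_inverse matrix_left_invertible_ker)
  define Hi where "Hi = matrix_inv (H bh)"
  have HHi: "H bh ** Hi = mat 1 \<and> Hi ** H bh = mat 1"
    unfolding Hi_def matrix_inv_def using inv unfolding invertible_def by (rule someI_ex)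
  have Hib: "c * norm (Hi *v w) \<le> norm w" for w
  proof -
    define v where "v = Hi *v w"
    have Hv: "H bh *v v = w" unfolding v_def using HHi
      by (simp add: matrix_vector_mul_assoc)
    have "c * (norm v)^2 \<le> norm v * norm w"
      using hpos[of v] norm_cauchy_schwarz[of v w] Hv by (simp add: power2_norm_eq_inner)
    then show ?thesis unfolding v_def[symmetric]
      by (cases "norm v = 0") (auto simp: power2_eq_square pos)
  qed
  \<comment> \<open>Newton step error\<close>
  define d where "d = bs - bh"
  define F where "F = G bs - G bh - H bh *v d"
  have nd: "norm d = r" unfolding d_def r_def by (simp add: norm_minus_commute)
  have hl2: "opnorm (H x - H y) \<le> M * norm (x - y)" for x y by (rule hlip)
  have Fb: "norm F \<le> M * r^2 / 2"
  proof -
    define \<psi> where "\<psi> t = F \<bullet> G (bh + t *\<^sub>R d) - t * (F \<bullet> (H bh *v d))" for t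
    define \<psi>' where "\<psi>' t = F \<bullet> (H (bh + t *\<^sub>R d) *v d) - F \<bullet> (H bh *v d)" for t
    have dd: "(\<psi> has_real_derivative \<psi>' t) (at t)" for t
      unfolding \<psi>_def \<psi>'_def
      by (auto intro!: derivative_eq_intros line_deriv_vec[OF dG])
    have bd: "\<psi>' t \<le> 0 + (norm F * M * r^2) * t" if "0 \<le> t" "t \<le> 1" for t
    proof -
      have "\<psi>' t = F \<bullet> ((H (bh + t *\<^sub>R d) - H bh) *v d)"
        unfolding \<psi>'_def by (simp add: matrix_vector_mult_diff_rdistrib inner_diff_right)
      also have "\<dots> \<le> norm F * norm ((H (bh + t *\<^sub>R d) - H bh) *v d)" by (rule norm_cauchy_schwarz)
      also have "\<dots> \<le> norm F * (opnorm (H (bh + t *\<^sub>R d) - H bh) * norm d)"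
        by (rule mult_left_mono) (auto simp: opnorm_def intro!: onorm[OF matrix_vector_mul_bounded_linear])
      also have "\<dots> \<le> norm F * ((M * (t * r)) * r)"
        using hl2[of "bh + t *\<^sub>R d" bh] that nd
        by (intro mult_left_mono mult_right_mono) (auto simp: mult_right_mono)
      finally show ?thesis by (simp add: algebra_simps power2_eq_square)
    qed
    have "\<psi> 1 - \<psi> 0 \<le> 0 + (norm F * M * r^2) / 2"
      by (rule seg_bound[OF dd bd])
    moreover have "\<psi> 1 - \<psi> 0 = (norm F)^2"
      unfolding \<psi>_def F_def d_def by (simp add: power2_norm_eq_inner algebra_simps inner_diff_right)
    ultimately have "(norm F)^2 \<le> norm F * (M * r^2 / 2)" by simp
    then show ?thesis using M0
      by (cases "norm F = 0") (auto simp: power2_eq_square)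
  qed
  define bt where "bt = bh + Hi *v ((1/nn) *\<^sub>R gL bh)"
  have bte: "bt - bs = Hi *v F"
  proof -
    have "Hi *v F = Hi *v ((1/nn) *\<^sub>R gL bh) - Hi *v (H bh *v d)"
      unfolding F_def using Gs Gh by (simp add: matrix_vector_mult_diff_distrib)
    also have "Hi *v (H bh *v d) = d" using HHi by (simp add: matrix_vector_mul_assoc)
    finally show ?thesis unfolding bt_def d_def by simp
  qed
  define D where "D = norm (bt - bs)"
  have D0: "D \<ge> 0" unfolding D_def by simp
  have DK: "D \<le> K * \<rho>^2"
  proof -
    have "c * D \<le> norm F" unfolding D_def bte by (rule Hib)
    also have "\<dots> \<le> M * r^2 / 2" by (rule Fb)
    finally have "D \<le> K * r^2" unfolding K_def using pos by (simp add: field_simps)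
    also have "\<dots> \<le> K * \<rho>^2" using r\<rho> g0 K0 by (intro mult_left_mono power_mono) auto
    finally show ?thesis .
  qed
  have RHS: "K * \<rho>^2 * (g + Li * \<rho>) + Li * (K * \<rho>^2)^2 / 2
      = (M/(2*c)) * g^3 / (nn^2*cm^2) + (M/(2*c)) * (Li * g^3) / (nn^3*cm^3)
        + (M/(2*c))^2 * (Li * g^4) / (2*nn^4*cm^4)"
    unfolding K_def \<rho>_def using pos by (simp add: field_simps power2_eq_square power3_eq_cube power4_eq_xxxx)
  show ?thesis
  proof (cases "g = 0")
    case True
    then have "\<rho> = 0" unfolding \<rho>_def by simp
    then have "D = 0" using DK D0 by simp
    then have "bt = bs" unfolding D_def by simp
    then show ?thesis unfolding bt_def Hi_def g_def[symmetric] using True by simp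
  next
    case False
    then have L: "norm (gL x - gL y) \<le> Li * norm (x - y)" for x y
      using lip unfolding g_def by auto
    define e where "e = bt - bs"
    define \<phi> where "\<phi> t = l (bs + t *\<^sub>R e)" for t
    define \<phi>' where "\<phi>' t = gL (bs + t *\<^sub>R e) \<bullet> e" for t
    have dd: "(\<phi> has_real_derivative \<phi>' t) (at t)" for t
      unfolding \<phi>_def \<phi>'_def by (rule line_deriv_scalar[OF dl])
    have dd2: "((\<lambda>t. - \<phi> t) has_real_derivative - \<phi>' t) (at t)" for t
      by (auto intro!: derivative_eq_intros dd)
    have ab: "\<bar>\<phi>' t\<bar> \<le> D * (g + Li * r) + (Li * D^2) * t" if "0 \<le> t" "t \<le> 1" for t
    proof -
      have "\<bar>\<phi>' t\<bar> \<le> norm (gL (bs + t *\<^sub>R e)) * D"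
        unfolding \<phi>'_def D_def e_def by (rule Cauchy_Schwarz_ineq2)
      also have "norm (gL (bs + t *\<^sub>R e)) \<le> g + Li * (r + t * D)"
      proof -
        have "norm (gL (bs + t *\<^sub>R e)) \<le> norm (gL bh) + norm (gL (bs + t *\<^sub>R e) - gL bh)"
          by (rule norm_triangle_sub)
        also have "norm (gL (bs + t *\<^sub>R e) - gL bh) \<le> Li * norm (bs + t *\<^sub>R e - bh)" by (rule L)
        also have "norm (bs + t *\<^sub>R e - bh) \<le> norm (bs - bh) + norm (t *\<^sub>R e)"
          by (metis add_diff_eq diff_add_eq norm_triangle_ineq)
        also have "norm (bs - bh) + norm (t *\<^sub>R e) = r + t * D"
          unfolding r_def D_def e_def using that by (simp add: norm_minus_commute)
        finally show ?thesis unfolding g_def using pos by (simp add: mult_left_mono)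
      qed
      then have "norm (gL (bs + t *\<^sub>R e)) * D \<le> (g + Li * (r + t * D)) * D"
        using D0 by (rule mult_right_mono)
      finally show ?thesis by (simp add: algebra_simps power2_eq_square)
    qed
    have s1: "\<phi> 1 - \<phi> 0 \<le> D * (g + Li * r) + (Li * D^2) / 2"
      by (rule seg_bound[OF dd]) (use ab in fastforce)
    have s2: "(- \<phi> 1) - (- \<phi> 0) \<le> D * (g + Li * r) + (Li * D^2) / 2"
      by (rule seg_bound[OF dd2]) (use ab in fastforce)
    have "\<bar>\<phi> 1 - \<phi> 0\<bar> \<le> D * (g + Li * r) + (Li * D^2) / 2" using s1 s2 by linarith
    also have "\<dots> \<le> K * \<rho>^2 * (g + Li * \<rho>) + Li * (K * \<rho>^2)^2 / 2"
    proof -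
      have "D * (g + Li * r) \<le> K * \<rho>^2 * (g + Li * \<rho>)"
        using DK r\<rho> pos g0 D0 K0 by (intro mult_mono add_left_mono mult_left_mono) auto
      moreover have "Li * D^2 \<le> Li * (K * \<rho>^2)^2"
        using DK D0 pos by (intro mult_left_mono power_mono) auto
      ultimately show ?thesis by simp
    qed
    finally have fin: "\<bar>\<phi> 1 - \<phi> 0\<bar> \<le> K * \<rho>^2 * (g + Li * \<rho>) + Li * (K * \<rho>^2)^2 / 2" .
    have "\<phi> 1 - \<phi> 0 = l (bh + matrix_inv (H bh) *v ((1/nn) *\<^sub>R gL bh)) - l bs"
      unfolding \<phi>_def e_def bt_def Hi_def by simp
    then show ?thesis using fin RHS unfolding g_def by simp
  qed
qed
lemma sum_mat_vec: "finite S \<Longrightarrow> (sum A S) *v (h::real^'n) = (\<Sum>j\<in>S. A j *v h)"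
  for A :: "'a \<Rightarrow> real^'n^'m"
  by (induction S rule: finite_induct) (auto simp: matrix_vector_mult_add_rdistrib)

lemma exists_ne_vec: "\<exists>x y::real^'d. x \<noteq> y"
  by (metis norm_axis_1 norm_zero zero_neq_one)

lemma Lip_nonneg: "Lip (f :: real^'d \<Rightarrow> real^'d) \<ge> 0"
proof -
  obtain x y :: "real^'d" where xy: "x \<noteq> y" using exists_ne_vec by blast
  have "ereal (norm (f x - f y) / norm (x - y)) \<le> Lip f"
    unfolding Lip_def using xy by (intro SUP_upper2[of "(x,y)"]) auto
  moreover have "0 \<le> ereal (norm (f x - f y) / norm (x - y))" by simp
  ultimately show ?thesis by (meson order.trans)
qed

lemma Lip_bound:
  assumes "Lip (f :: real^'d \<Rightarrow> real^'d) \<le> ereal Li"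
  shows "norm (f x - f y) \<le> Li * norm (x - y)"
proof (cases "x = y")
  case True then show ?thesis
    using Lip_nonneg[of f] assms by simp
next
  case False
  have "ereal (norm (f x - f y) / norm (x - y)) \<le> Lip f"
    unfolding Lip_def using False by (intro SUP_upper2[of "(x,y)"]) auto
  then have "norm (f x - f y) / norm (x - y) \<le> Li" using assms by (meson ereal_less_eq(3) order.trans)
  then show ?thesis using False by (simp add: divide_le_eq mult.commute)
qed

lemma Lip_op_bound:
  assumes "Lip_op (f :: real^'d \<Rightarrow> real^'d^'d) \<le> ereal M"
  shows "opnorm (f x - f y) \<le> M * norm (x - y)"
proof (cases "x = y")
  case True
  obtain a b :: "real^'d" where ab: "a \<noteq> b" using exists_ne_vec by blast
  have "ereal (opnorm (f a - f b) / norm (a - b)) \<le> Lip_op f"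
    unfolding Lip_op_def using ab by (intro SUP_upper2[of "(a,b)"]) auto
  then have "opnorm (f a - f b) / norm (a - b) \<le> M" using assms by (meson ereal_less_eq(3) order.trans)
  moreover have "0 \<le> opnorm (f a - f b) / norm (a - b)"
    unfolding opnorm_def by (simp add: onorm_pos_le[OF matrix_vector_mul_bounded_linear])
  ultimately have "M \<ge> 0" by linarith
  then show ?thesis using True by (simp add: opnorm_def onorm_zero)
next
  case False
  have "ereal (opnorm (f x - f y) / norm (x - y)) \<le> Lip_op f"
    unfolding Lip_op_def using False by (intro SUP_upper2[of "(x,y)"]) auto
  then have "opnorm (f x - f y) / norm (x - y) \<le> M" using assms by (meson ereal_less_eq(3) order.trans)
  then show ?thesis using False by (simp add: divide_le_eq mult.commute)
qed

lemma ereal_term: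
  assumes "0 \<le> K" "ereal K \<le> \<kappa>" "0 \<le> a" "ereal a \<le> B" "p > 0"
  shows "ereal (K * a / p) \<le> \<kappa> * B / ereal p"
proof -
  have k0: "0 \<le> \<kappa>" using assms(1,2) by (meson ereal_less_eq(5) order.trans)
  have "ereal K * ereal a \<le> \<kappa> * B"
    by (rule ereal_mult_mono) (use assms k0 in auto)
  then have "ereal K * ereal a * ereal (1/p) \<le> \<kappa> * B * ereal (1/p)"
    by (rule ereal_mult_right_mono) (use assms in auto)
  moreover have "\<kappa> * B * ereal (1/p) = \<kappa> * B / ereal p"
    using assms(5) by (simp add: divide_ereal_def inverse_eq_divide)
  ultimately show ?thesis by simp
qed
theorem theorem1:
  fixes L :: "'z \<Rightarrow> real^'d \<Rightarrow> real" and \<pi> :: "real^'d \<Rightarrow> real"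
    and gl :: "'z \<Rightarrow> real^'d \<Rightarrow> real^'d" and Hl :: "'z \<Rightarrow> real^'d \<Rightarrow> real^'d^'d"
    and gp :: "real^'d \<Rightarrow> real^'d" and Hp :: "real^'d \<Rightarrow> real^'d^'d"
    and z :: "nat \<Rightarrow> 'z" and n :: nat and \<Lambda> :: "real set"
    and bh :: "real \<Rightarrow> real^'d" and bhi :: "nat \<Rightarrow> real \<Rightarrow> real^'d"
    and cl cp cm lpi Cl3 Cp3 :: real
  assumes n_pos: "n > 0"
    and grad_l: "\<And>x \<beta>. (L x has_derivative (\<lambda>h. gl x \<beta> \<bullet> h)) (at \<beta>)"
    and hess_l: "\<And>x \<beta>. (gl x has_derivative (\<lambda>h. Hl x \<beta> *v h)) (at \<beta>)"
    and grad_p: "\<And>\<beta>. (\<pi> has_derivative (\<lambda>h. gp \<beta> \<bullet> h)) (at \<beta>)"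
    and hess_p: "\<And>\<beta>. (gp has_derivative (\<lambda>h. Hp \<beta> *v h)) (at \<beta>)"
    and Lambda: "\<Lambda> \<subseteq> {0..}"
    and bh_min: "\<And>lam. lam \<in> \<Lambda> \<Longrightarrow> is_arg_min (\<lambda>\<beta>. m_full L \<pi> z n \<beta> lam) (\<lambda>_. True) (bh lam)"
    and bhi_min: "\<And>i lam. i \<in> {1..n} \<Longrightarrow> lam \<in> \<Lambda> \<Longrightarrow>
                    is_arg_min (\<lambda>\<beta>. m_loo L \<pi> z n i \<beta> lam) (\<lambda>_. True) (bhi i lam)"
    and pos_consts: "cl > 0" "cp > 0" "cm > 0"
    and a_growth: "\<And>i lam. i \<in> {1..n} \<Longrightarrow> lam \<in> \<Lambda> \<Longrightarrow>
                    gradient_growth (\<lambda>r. cm * r\<^sup>2) (\<lambda>\<beta>. m_loo L \<pi> z n i \<beta> lam)"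
    and a_hess: "\<And>i lam lam' v. i \<in> {1..n} \<Longrightarrow> lam \<in> \<Lambda> \<Longrightarrow> lam' \<in> \<Lambda> \<Longrightarrow>
                    (cl + lam' * cp * (if lam \<ge> lpi then 1 else 0)) * (v \<bullet> v)
                      \<le> v \<bullet> (hess_loo Hl Hp z n i (bh lam) lam' *v v)"
    and b_03: "Bsr gl z n bh \<Lambda> 0 3 < \<infinity>"
    and b_13: "Bsr gl z n bh \<Lambda> 1 3 < \<infinity>"
    and b_14: "Bsr gl z n bh \<Lambda> 1 4 < \<infinity>"
    and c_lip: "\<And>i lam. i \<in> {1..n} \<Longrightarrow> lam \<in> \<Lambda> \<Longrightarrow>
                    Lip_op (\<lambda>\<beta>. hess_loo Hl Hp z n i \<beta> lam) \<le> ereal (Cl3 + lam * Cp3)"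
  shows "\<forall>lam\<in>\<Lambda>. ereal \<bar>ACV L gl Hl Hp z n bh lam - CV L z n bhi lam\<bar>
           \<le> kappa2 Cl3 Cp3 cl cp lpi * Bsr gl z n bh \<Lambda> 0 3 / ereal (real n ^ 2 * cm ^ 2)
             + kappa2 Cl3 Cp3 cl cp lpi * Bsr gl z n bh \<Lambda> 1 3 / ereal (real n ^ 3 * cm ^ 3)
             + (kappa2 Cl3 Cp3 cl cp lpi)\<^sup>2 * Bsr gl z n bh \<Lambda> 1 4 / ereal (2 * real n ^ 4 * cm ^ 4)"
proof (intro ballI)
  fix lam assume lam: "lam \<in> \<Lambda>"
  have lam0: "lam \<ge> 0" using Lambda lam by auto
  define c where "c = cl + lam * cp * (if lam \<ge> lpi then 1 else 0)"
  have c0: "c > 0" unfolding c_def using pos_consts lam0 by (auto intro: add_pos_nonneg)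
  define M where "M = Cl3 + lam * Cp3"
  define K where "K = M / (2*c)"
  define nn where "nn = real n"
  have nn0: "nn > 0" unfolding nn_def using n_pos by simp
  define g where "g i = norm (gl (z i) (bh lam))" for i
  define Li where "Li i = (if g i = 0 then 0 else real_of_ereal (Lip (gl (z i))))" for i
  define G where "G i \<beta> = (1/real n) *\<^sub>R (\<Sum>j\<in>{1..n} - {i}. gl (z j) \<beta>) + lam *\<^sub>R gp \<beta>" for i \<beta>
  define Gf where "Gf \<beta> = (1/real n) *\<^sub>R (\<Sum>j\<in>{1..n}. gl (z j) \<beta>) + lam *\<^sub>R gp \<beta>" for \<beta>
  have dloo: "((\<lambda>\<beta>. m_loo L \<pi> z n i \<beta> lam) has_derivative (\<lambda>h. G i \<beta> \<bullet> h)) (at \<beta>)" for i \<beta>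
  proof -
    have e: "(\<lambda>\<beta>. m_loo L \<pi> z n i \<beta> lam) = (\<lambda>\<beta>. (1/real n) * (\<Sum>j\<in>{1..n}-{i}. L (z j) \<beta>) + lam * \<pi> \<beta>)"
      by (simp add: fun_eq_iff m_loo_def)
    have "((\<lambda>\<beta>. (1/real n) * (\<Sum>j\<in>{1..n}-{i}. L (z j) \<beta>) + lam * \<pi> \<beta>) has_derivative
        (\<lambda>h. (1/real n) * (\<Sum>j\<in>{1..n}-{i}. gl (z j) \<beta> \<bullet> h) + lam * (gp \<beta> \<bullet> h))) (at \<beta>)"
      by (intro has_derivative_add has_derivative_mult_right has_derivative_sum grad_l grad_p)
    then show ?thesis unfolding e
      by (rule has_derivative_eq_rhs) (simp add: fun_eq_iff G_def inner_add_left inner_sum_left)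
  qed
  have dfull: "((\<lambda>\<beta>. m_full L \<pi> z n \<beta> lam) has_derivative (\<lambda>h. Gf \<beta> \<bullet> h)) (at \<beta>)" for \<beta>
  proof -
    have e: "(\<lambda>\<beta>. m_full L \<pi> z n \<beta> lam) = (\<lambda>\<beta>. (1/real n) * (\<Sum>j\<in>{1..n}. L (z j) \<beta>) + lam * \<pi> \<beta>)"
      by (simp add: fun_eq_iff m_full_def)
    have "((\<lambda>\<beta>. (1/real n) * (\<Sum>j\<in>{1..n}. L (z j) \<beta>) + lam * \<pi> \<beta>) has_derivative
        (\<lambda>h. (1/real n) * (\<Sum>j\<in>{1..n}. gl (z j) \<beta> \<bullet> h) + lam * (gp \<beta> \<bullet> h))) (at \<beta>)"
      by (intro has_derivative_add has_derivative_mult_right has_derivative_sum grad_l grad_p)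
    then show ?thesis unfolding e
      by (rule has_derivative_eq_rhs) (simp add: fun_eq_iff Gf_def inner_add_left inner_sum_left)
  qed
  have dG: "(G i has_derivative (\<lambda>h. hess_loo Hl Hp z n i \<beta> lam *v h)) (at \<beta>)" for i \<beta>
  proof -
    have "((\<lambda>\<beta>. (1/real n) *\<^sub>R (\<Sum>j\<in>{1..n} - {i}. gl (z j) \<beta>) + lam *\<^sub>R gp \<beta>) has_derivative
        (\<lambda>h. (1/real n) *\<^sub>R (\<Sum>j\<in>{1..n} - {i}. Hl (z j) \<beta> *v h) + lam *\<^sub>R (Hp \<beta> *v h))) (at \<beta>)"
      by (intro has_derivative_add has_derivative_scaleR_right has_derivative_sum hess_l hess_p)
    then show ?thesis unfolding G_def[abs_def]
      by (rule has_derivative_eq_rhs)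
         (simp add: fun_eq_iff hess_loo_def matrix_vector_mult_add_rdistrib sum_mat_vec
            scaleR_matrix_vector_assoc[symmetric])
  qed
  have Gf0: "Gf (bh lam) = 0" by (rule min_grad_zero[OF dfull bh_min[OF lam]])
  have per: "\<bar>L (z i) (approx_loo gl Hl Hp z n bh i lam) - L (z i) (bhi i lam)\<bar>
     \<le> K * (g i)^3 / (nn^2*cm^2) + K * (Li i * (g i)^3) / (nn^3*cm^3)
       + K^2 * (Li i * (g i)^4) / (2*nn^4*cm^4)"
     and Li0: "Li i \<ge> 0"
     if i: "i \<in> {1..n}" for i
  proof -
    have Gs: "G i (bhi i lam) = 0" by (rule min_grad_zero[OF dloo bhi_min[OF i lam]])
    have "Gf (bh lam) = G i (bh lam) + (1/real n) *\<^sub>R gl (z i) (bh lam)"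
    proof -
      have "(\<Sum>j\<in>{1..n}. gl (z j) (bh lam)) = gl (z i) (bh lam) + (\<Sum>j\<in>{1..n} - {i}. gl (z j) (bh lam))"
        using i by (intro sum.remove) auto
      then show ?thesis unfolding Gf_def G_def by (simp add: algebra_simps scaleR_add_right)
    qed
    then have Gh: "G i (bh lam) = - ((1/nn) *\<^sub>R gl (z i) (bh lam))"
      using Gf0 unfolding nn_def by (simp add: eq_neg_iff_add_eq_0 add.commute)
    have sub: "G i x \<in> subdiff (\<lambda>\<beta>. m_loo L \<pi> z n i \<beta> lam) x" for x
    proof -
      have gg: "gradient_growth (\<lambda>r. cm * r\<^sup>2) (\<lambda>\<beta>. m_loo L \<pi> z n i \<beta> lam)"
        by (rule a_growth[OF i lam])
      then obtain u where u: "u \<in> subdiff (\<lambda>\<beta>. m_loo L \<pi> z n i \<beta> lam) x"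
        unfolding gradient_growth_def by blast
      have "G i x = u" by (rule grad_in_subdiff[OF dloo]) (use u in \<open>simp add: subdiff_def\<close>)
      then show ?thesis using u by simp
    qed
    have grow: "cm * (norm (bh lam - bhi i lam))\<^sup>2
        \<le> (bhi i lam - bh lam) \<bullet> (G i (bhi i lam) - G i (bh lam))"
      using a_growth[OF i lam] sub unfolding gradient_growth_def by blast
    have hpos: "c * (v \<bullet> v) \<le> v \<bullet> (hess_loo Hl Hp z n i (bh lam) lam *v v)" for v
      unfolding c_def by (rule a_hess[OF i lam lam])
    have hlip: "opnorm (hess_loo Hl Hp z n i x lam - hess_loo Hl Hp z n i y lam) \<le> M * norm (x - y)" for x y
      unfolding M_def by (rule Lip_op_bound[OF c_lip[OF i lam]])
    have Lfin: "Lip (gl (z i)) = ereal (Li i)" if gne: "g i \<noteq> 0"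
    proof -
      have "(\<Sum>j\<in>{1..n}. Lip (gl (z j)) ^ 1 * ereal (norm (gl (z j) (bh lam)) ^ 3)) / ereal (real n)
          \<le> Bsr gl z n bh \<Lambda> 1 3"
        unfolding Bsr_def by (rule SUP_upper[OF lam])
      then have lt: "(\<Sum>j\<in>{1..n}. Lip (gl (z j)) ^ 1 * ereal (norm (gl (z j) (bh lam)) ^ 3)) / ereal (real n) < \<infinity>"
        using b_13 by (meson order.strict_trans1)
      have "Lip (gl (z i)) \<noteq> \<infinity>"
      proof
        assume inf: "Lip (gl (z i)) = \<infinity>"
        have "g i > 0" using gne unfolding g_def by simp
        then have "Lip (gl (z i)) ^ 1 * ereal (norm (gl (z i) (bh lam)) ^ 3) = \<infinity>"
          using inf unfolding g_def by simp
        then have "(\<Sum>j\<in>{1..n}. Lip (gl (z j)) ^ 1 * ereal (norm (gl (z j) (bh lam)) ^ 3)) = \<infinity>"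
          using i by (subst sum_Pinfty) auto
        then show False using lt n_pos by simp
      qed
      moreover have "Lip (gl (z i)) \<noteq> - \<infinity>" using Lip_nonneg[of "gl (z i)"] by auto
      ultimately show ?thesis unfolding Li_def using gne by (cases "Lip (gl (z i))") auto
    qed
    show Li0: "Li i \<ge> 0"
    proof (cases "g i = 0")
      case True then show ?thesis unfolding Li_def by simp
    next
      case False then show ?thesis using Lfin Lip_nonneg[of "gl (z i)"] by simp
    qed
    have lip: "gl (z i) (bh lam) = 0 \<or> (\<forall>x y. norm (gl (z i) x - gl (z i) y) \<le> Li i * norm (x - y))"
    proof (cases "g i = 0")
      case True then show ?thesis unfolding g_def by simp
    next
      case False then show ?thesis using Lfin Lip_bound by (metis order_refl)
    qed
    have "\<bar>L (z i) (bh lam + matrix_inv (hess_loo Hl Hp z n i (bh lam) lam) *v ((1/nn) *\<^sub>R gl (z i) (bh lam)))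
            - L (z i) (bhi i lam)\<bar>
      \<le> (M/(2*c)) * (norm (gl (z i) (bh lam)))^3 / (nn^2*cm^2)
       + (M/(2*c)) * (Li i * (norm (gl (z i) (bh lam)))^3) / (nn^3*cm^3)
       + (M/(2*c))^2 * (Li i * (norm (gl (z i) (bh lam)))^4) / (2*nn^4*cm^4)"
      by (rule per_i[OF grad_l dG Gs Gh grow hpos hlip lip nn0 pos_consts(3) c0 Li0])
    then show "\<bar>L (z i) (approx_loo gl Hl Hp z n bh i lam) - L (z i) (bhi i lam)\<bar>
     \<le> K * (g i)^3 / (nn^2*cm^2) + K * (Li i * (g i)^3) / (nn^3*cm^3)
       + K^2 * (Li i * (g i)^4) / (2*nn^4*cm^4)"
      unfolding approx_loo_def K_def g_def nn_def by simp
  qed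
  define a03 where "a03 = (\<Sum>i\<in>{1..n}. (g i)^3) / nn"
  define a13 where "a13 = (\<Sum>i\<in>{1..n}. Li i * (g i)^3) / nn"
  define a14 where "a14 = (\<Sum>i\<in>{1..n}. Li i * (g i)^4) / nn"
  have real_bound: "\<bar>ACV L gl Hl Hp z n bh lam - CV L z n bhi lam\<bar>
      \<le> K * a03 / (nn^2*cm^2) + K * a13 / (nn^3*cm^3) + K^2 * a14 / (2*nn^4*cm^4)"
  proof -
    have "ACV L gl Hl Hp z n bh lam - CV L z n bhi lam
        = (\<Sum>i\<in>{1..n}. L (z i) (approx_loo gl Hl Hp z n bh i lam) - L (z i) (bhi i lam)) / nn"
      unfolding ACV_def CV_def nn_def by (simp add: sum_subtractf diff_divide_distrib)
    then have "\<bar>ACV L gl Hl Hp z n bh lam - CV L z n bhi lam\<bar>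
        = \<bar>\<Sum>i\<in>{1..n}. L (z i) (approx_loo gl Hl Hp z n bh i lam) - L (z i) (bhi i lam)\<bar> / nn"
      using nn0 by simp
    also have "\<dots> \<le> (\<Sum>i\<in>{1..n}. \<bar>L (z i) (approx_loo gl Hl Hp z n bh i lam) - L (z i) (bhi i lam)\<bar>) / nn"
      using nn0 by (intro divide_right_mono sum_abs) auto
    also have "\<dots> \<le> (\<Sum>i\<in>{1..n}. K * (g i)^3 / (nn^2*cm^2) + K * (Li i * (g i)^3) / (nn^3*cm^3)
       + K^2 * (Li i * (g i)^4) / (2*nn^4*cm^4)) / nn"
      using nn0 by (intro divide_right_mono sum_mono per) auto
    also have "\<dots> = (K * (\<Sum>i\<in>{1..n}. (g i)^3) / (nn^2*cm^2) + K * (\<Sum>i\<in>{1..n}. Li i * (g i)^3) / (nn^3*cm^3)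
       + K^2 * (\<Sum>i\<in>{1..n}. Li i * (g i)^4) / (2*nn^4*cm^4)) / nn"
      by (simp add: sum.distrib sum_divide_distrib sum_distrib_left)
    also have "\<dots> = K * a03 / (nn^2*cm^2) + K * a13 / (nn^3*cm^3) + K^2 * a14 / (2*nn^4*cm^4)"
      unfolding a03_def a13_def a14_def using nn0 by (simp add: field_simps)
    finally show ?thesis .
  qed
  have K0: "K \<ge> 0"
  proof -
    have "opnorm (hess_loo Hl Hp z n 1 0 lam - hess_loo Hl Hp z n 1 0 lam) \<le> M * norm (0 - (0::real^'d))"
      by (rule Lip_op_bound) (use c_lip[of 1 lam] n_pos lam in \<open>auto simp: M_def\<close>)
    obtain k :: 'd where True by simp
    have "0 \<le> opnorm (hess_loo Hl Hp z n 1 0 lam - hess_loo Hl Hp z n 1 (axis k 1) lam)"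
      unfolding opnorm_def by (rule onorm_pos_le[OF matrix_vector_mul_bounded_linear])
    also have "\<dots> \<le> M * norm (0 - axis k (1::real))"
      unfolding M_def by (rule Lip_op_bound) (use c_lip[of 1 lam] n_pos lam in auto)
    finally have "M \<ge> 0" by (simp add: norm_axis_1)
    then show ?thesis unfolding K_def using c0 by simp
  qed
  have Kk: "ereal K \<le> kappa2 Cl3 Cp3 cl cp lpi"
    unfolding kappa2_def K_def M_def c_def
    by (rule SUP_upper2[of lam]) (use lam0 in auto)
  have Kk2: "ereal (K^2) \<le> (kappa2 Cl3 Cp3 cl cp lpi)\<^sup>2"
  proof -
    have "ereal K * ereal K \<le> kappa2 Cl3 Cp3 cl cp lpi * kappa2 Cl3 Cp3 cl cp lpi"
      by (rule ereal_mult_mono) (use K0 Kk in \<open>auto intro: order.trans[of 0 "ereal K"]\<close>)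
    then show ?thesis by (simp add: power2_eq_square)
  qed
  have A03: "ereal a03 \<le> Bsr gl z n bh \<Lambda> 0 3"
  proof -
    have "(\<Sum>i\<in>{1..n}. Lip (gl (z i)) ^ 0 * ereal (norm (gl (z i) (bh lam)) ^ 3)) / ereal (real n)
        \<le> Bsr gl z n bh \<Lambda> 0 3"
      unfolding Bsr_def by (rule SUP_upper[OF lam])
    moreover have "(\<Sum>i\<in>{1..n}. Lip (gl (z i)) ^ 0 * ereal (norm (gl (z i) (bh lam)) ^ 3)) / ereal (real n)
        = ereal a03"
      unfolding a03_def g_def nn_def using n_pos by (simp add: sum_ereal)
    ultimately show ?thesis by simp
  qed
  have Lterm: "Lip (gl (z i)) ^ 1 * ereal (norm (gl (z i) (bh lam)) ^ r) = ereal (Li i * (g i)^r)"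
    if i: "i \<in> {1..n}" and r: "r > 0" for i r
  proof (cases "g i = 0")
    case True then show ?thesis using r unfolding g_def by (simp add: zero_power zero_ereal_def[symmetric])
  next
    case False
    have "Lip (gl (z i)) \<noteq> \<infinity>"
    proof
      assume inf: "Lip (gl (z i)) = \<infinity>"
      have "(\<Sum>j\<in>{1..n}. Lip (gl (z j)) ^ 1 * ereal (norm (gl (z j) (bh lam)) ^ 3)) / ereal (real n)
          \<le> Bsr gl z n bh \<Lambda> 1 3"
        unfolding Bsr_def by (rule SUP_upper[OF lam])
      then have lt: "(\<Sum>j\<in>{1..n}. Lip (gl (z j)) ^ 1 * ereal (norm (gl (z j) (bh lam)) ^ 3)) / ereal (real n) < \<infinity>"
        using b_13 by (meson order.strict_trans1)
      have "g i > 0" using False unfolding g_def by simp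
      then have "Lip (gl (z i)) ^ 1 * ereal (norm (gl (z i) (bh lam)) ^ 3) = \<infinity>"
        using inf unfolding g_def by simp
      then have "(\<Sum>j\<in>{1..n}. Lip (gl (z j)) ^ 1 * ereal (norm (gl (z j) (bh lam)) ^ 3)) = \<infinity>"
        using i by (subst sum_Pinfty) auto
      then show False using lt n_pos by simp
    qed
    moreover have "Lip (gl (z i)) \<noteq> - \<infinity>" using Lip_nonneg[of "gl (z i)"] by auto
    ultimately have "Lip (gl (z i)) = ereal (Li i)" unfolding Li_def using False
      by (cases "Lip (gl (z i))") auto
    then show ?thesis unfolding g_def by simp
  qed
  have A1r: "ereal ((\<Sum>i\<in>{1..n}. Li i * (g i)^r) / nn) \<le> Bsr gl z n bh \<Lambda> 1 r" if r: "r > 0" for r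
  proof -
    have "(\<Sum>i\<in>{1..n}. Lip (gl (z i)) ^ 1 * ereal (norm (gl (z i) (bh lam)) ^ r)) / ereal (real n)
        \<le> Bsr gl z n bh \<Lambda> 1 r"
      unfolding Bsr_def by (rule SUP_upper[OF lam])
    moreover have "(\<Sum>i\<in>{1..n}. Lip (gl (z i)) ^ 1 * ereal (norm (gl (z i) (bh lam)) ^ r)) / ereal (real n)
        = ereal ((\<Sum>i\<in>{1..n}. Li i * (g i)^r) / nn)"
      using n_pos Lterm[OF _ r] unfolding nn_def by (simp add: sum_ereal)
    ultimately show ?thesis by simp
  qed
  have a0: "a03 \<ge> 0" "a13 \<ge> 0" "a14 \<ge> 0"
    unfolding a03_def a13_def a14_def using nn0 Li0
    by (auto intro!: divide_nonneg_pos sum_nonneg mult_nonneg_nonneg simp: g_def)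
  have t1: "ereal (K * a03 / (nn^2*cm^2)) \<le> kappa2 Cl3 Cp3 cl cp lpi * Bsr gl z n bh \<Lambda> 0 3 / ereal (real n ^ 2 * cm ^ 2)"
    unfolding nn_def by (rule ereal_term[OF K0 Kk a0(1) A03]) (use n_pos pos_consts in auto)
  have t2: "ereal (K * a13 / (nn^3*cm^3)) \<le> kappa2 Cl3 Cp3 cl cp lpi * Bsr gl z n bh \<Lambda> 1 3 / ereal (real n ^ 3 * cm ^ 3)"
    unfolding nn_def by (rule ereal_term[OF K0 Kk a0(2) A1r[of 3, folded a13_def]]) (use n_pos pos_consts in auto)
  have t3: "ereal (K^2 * a14 / (2*nn^4*cm^4)) \<le> (kappa2 Cl3 Cp3 cl cp lpi)\<^sup>2 * Bsr gl z n bh \<Lambda> 1 4 / ereal (2 * real n ^ 4 * cm ^ 4)"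
    unfolding nn_def by (rule ereal_term[OF _ Kk2 a0(3) A1r[of 4, folded a14_def]]) (use n_pos pos_consts in auto)
  have "ereal \<bar>ACV L gl Hl Hp z n bh lam - CV L z n bhi lam\<bar>
      \<le> ereal (K * a03 / (nn^2*cm^2)) + ereal (K * a13 / (nn^3*cm^3)) + ereal (K^2 * a14 / (2*nn^4*cm^4))"
    using real_bound by simp
  also have "\<dots> \<le> kappa2 Cl3 Cp3 cl cp lpi * Bsr gl z n bh \<Lambda> 0 3 / ereal (real n ^ 2 * cm ^ 2)
             + kappa2 Cl3 Cp3 cl cp lpi * Bsr gl z n bh \<Lambda> 1 3 / ereal (real n ^ 3 * cm ^ 3)
             + (kappa2 Cl3 Cp3 cl cp lpi)\<^sup>2 * Bsr gl z n bh \<Lambda> 1 4 / ereal (2 * real n ^ 4 * cm ^ 4)"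
    by (intro add_mono t1 t2 t3)
  finally show "ereal \<bar>ACV L gl Hl Hp z n bh lam - CV L z n bhi lam\<bar>
           \<le> kappa2 Cl3 Cp3 cl cp lpi * Bsr gl z n bh \<Lambda> 0 3 / ereal (real n ^ 2 * cm ^ 2)
             + kappa2 Cl3 Cp3 cl cp lpi * Bsr gl z n bh \<Lambda> 1 3 / ereal (real n ^ 3 * cm ^ 3)
             + (kappa2 Cl3 Cp3 cl cp lpi)\<^sup>2 * Bsr gl z n bh \<Lambda> 1 4 / ereal (2 * real n ^ 4 * cm ^ 4)" .
qed

end
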